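(* Let $\mathbf{k}$ be an algebraically closed field, $G=\mathrm{GL}_n$, $M=\mathbf{k}^n$ the natural module, $\underline{G}=G\ltimes M$ and $\underline{\mathfrak{g}}=\mathrm{Lie}(\underline{G})=\mathfrak{gl}_n\times M$. For $(X,w)\in\underline{\mathcal{N}}$ let $\underline{\mathfrak{g}}_{(X,w)}=\{(Y,u)\in\underline{\mathfrak{g}}: [(X,w),(Y,u)]=0\}$ and $\underline{G}_{(X,w)}=\{(g,v)\in\underline{G}:\mathrm{Ad}(g,v)(X,w)=(X,w)\}$. Then (1) $\underline{\mathfrak{g}}_{(X,w)}=\mathrm{Lie}(\underline{G}_{(X,w)})$, and (2) $\underline{G}_{(X,w)}$ is connected.
   Context: $\underline{G}$ is $G\times M$ with product $(g_1,v_1)(g_2,v_2)=(g_1g_2,g_1v_2+v_1)$; the bracket on $\mathfrak{gl}_n\times M$ is $[(X_1,v_1),(X_2,v_2)]=([X_1,X_2],X_1v_2-X_2v_1)$; the adjoint action is $\mathrm{Ad}(g,v)(X,w)=(gXg^{-1},-(gXg^{-1})v+gw)$. $\underline{\mathcal{N}}=\mathcal{N}\times M$ with $\mathcal{N}$ the nilpotent cone of $\mathfrak{gl}_n$. *)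

theory Defs
  imports "HOL-Analysis.Analysis" "HOL-Computational_Algebra.Polynomial"
begin

definition alg_closed :: "'k::field itself \<Rightarrow> bool" where
  "alg_closed _ \<longleftrightarrow> (\<forall>p :: 'k poly. degree p > 0 \<longrightarrow> (\<exists>x. poly p x = 0))"

datatype ('k, 'v) pexpr =
    PVar 'v | PConst 'k
  | PAdd "('k, 'v) pexpr" "('k, 'v) pexpr"
  | PMul "('k, 'v) pexpr" "('k, 'v) pexpr"
  | PNeg "('k, 'v) pexpr"

primrec peval :: "('k::comm_ring_1, 'v) pexpr \<Rightarrow> ('v \<Rightarrow> 'k) \<Rightarrow> 'k" where
  "peval (PVar i) x = x i"
| "peval (PConst c) x = c"
| "peval (PAdd p q) x = peval p x + peval q x"
| "peval (PMul p q) x = peval p x * peval q x"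
| "peval (PNeg p) x = - peval p x"

primrec pdiff :: "('k::comm_ring_1, 'v) pexpr \<Rightarrow> ('v \<Rightarrow> 'k) \<Rightarrow> ('v \<Rightarrow> 'k) \<Rightarrow> 'k" where
  "pdiff (PVar i) x y = y i"
| "pdiff (PConst c) x y = 0"
| "pdiff (PAdd p q) x y = pdiff p x y + pdiff q x y"
| "pdiff (PMul p q) x y = pdiff p x y * peval q x + peval p x * pdiff q x y"
| "pdiff (PNeg p) x y = - pdiff p x y"

type_synonym ('k, 'n) pt = "('k ^ 'n ^ 'n) \<times> ('k ^ 'n)"

definition coords :: "('k, 'n::finite) pt \<Rightarrow> (('n \<times> 'n) + 'n) \<Rightarrow> 'k" where
  "coords z = (\<lambda>c. case c of Inl (i, j) \<Rightarrow> fst z $ i $ j | Inr i \<Rightarrow> snd z $ i)"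

text \<open>Zariski topology on Mat_n x k^n (basic opens are non-vanishing loci of polynomials);
  GL_n x k^n carries the subspace topology, so connectedness of a subset is intrinsic.\<close>
definition zariski :: "('k::comm_ring_1, 'n::finite) pt topology" where
  "zariski = topology_generated_by
     {{z. peval p (coords z) \<noteq> 0} | p :: ('k, ('n \<times> 'n) + 'n) pexpr. True}"

text \<open>Lie algebra of a closed subgroup H of G = GL_n \<ltimes> k^n: tangent space at the
  identity (1,0), i.e. the common kernel of the differentials at (1,0) of all polynomials
  vanishing on H (GL_n is open in Mat_n, so this is the tangent space of H).\<close>
definition Lie :: "('k::comm_ring_1, 'n::finite) pt set \<Rightarrow> ('k, 'n) pt set" where
  "Lie H = {Yu. \<forall>p :: ('k, ('n \<times> 'n) + 'n) pexpr.
      (\<forall>z\<in>H. peval p (coords z) = 0) \<longrightarrow>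
      pdiff p (coords (mat 1, 0)) (coords Yu) = 0}"

definition bracket :: "('k::field, 'n::finite) pt \<Rightarrow> ('k, 'n) pt \<Rightarrow> ('k, 'n) pt" where
  "bracket a b = (fst a ** fst b - fst b ** fst a, fst a *v snd b - fst b *v snd a)"

definition Ad :: "('k::field, 'n::finite) pt \<Rightarrow> ('k, 'n) pt \<Rightarrow> ('k, 'n) pt" where
  "Ad gv Xw = (let g = fst gv; v = snd gv; X = fst Xw; w = snd Xw;
               Z = g ** X ** matrix_inv g in (Z, - (Z *v v) + g *v w))"

definition nilpotent_mat :: "'k::field ^ 'n ^ 'n \<Rightarrow> bool" where
  "nilpotent_mat X \<longleftrightarrow> (\<exists>m. ((\<lambda>A. X ** A) ^^ m) (mat 1) = 0)"

definition centralizer :: "('k::field, 'n::finite) pt \<Rightarrow> ('k, 'n) pt set" where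
  "centralizer Xw = {Yu. bracket Xw Yu = (0, 0)}"

definition stabilizer :: "('k::field, 'n::finite) pt \<Rightarrow> ('k, 'n) pt set" where
  "stabilizer Xw = {gv. invertible (fst gv) \<and> Ad gv Xw = Xw}"

end

theory Submission
  imports Defs
begin

fun lineP :: "('k::comm_ring_1, 'v) pexpr \<Rightarrow> ('v \<Rightarrow> 'k) \<Rightarrow> ('v \<Rightarrow> 'k) \<Rightarrow> 'k poly" where
  "lineP (PVar i) x y = [:x i, y i:]"
| "lineP (PConst c) x y = [:c:]"
| "lineP (PAdd p q) x y = lineP p x y + lineP q x y"
| "lineP (PMul p q) x y = lineP p x y * lineP q x y"
| "lineP (PNeg p) x y = - lineP p x y"

lemma poly_lineP: "poly (lineP p x y) t = peval p (\<lambda>i. x i + t * y i)"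
  by (induction p) (auto simp: algebra_simps)

lemma coeff0_lineP: "coeff (lineP p x y) 0 = peval p x"
  by (induction p) (auto simp: coeff_mult)

lemma coeff1_lineP: "coeff (lineP p x y) 1 = pdiff p x y"
  by (induction p) (auto simp: coeff_mult coeff0_lineP algebra_simps)

definition psum :: "('k::comm_ring_1, 'v) pexpr list \<Rightarrow> ('k, 'v) pexpr" where
  "psum xs = foldr PAdd xs (PConst 0)"
definition pprod :: "('k::comm_ring_1, 'v) pexpr list \<Rightarrow> ('k, 'v) pexpr" where
  "pprod xs = foldr PMul xs (PConst 1)"

lemma peval_psum: "peval (psum xs) x = sum_list (map (\<lambda>q. peval q x) xs)"
  by (induction xs) (auto simp: psum_def)
lemma pdiff_psum: "pdiff (psum xs) x y = sum_list (map (\<lambda>q. pdiff q x y) xs)"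
  by (induction xs) (auto simp: psum_def)
lemma peval_pprod: "peval (pprod xs) x = prod_list (map (\<lambda>q. peval q x) xs)"
  by (induction xs) (auto simp: pprod_def)

definition enumN :: "'n::finite list" where
  "enumN = (SOME xs. set xs = UNIV \<and> distinct xs)"
lemma enumN: "set (enumN::'n::finite list) = UNIV" "distinct (enumN::'n::finite list)"
proof -
  have "\<exists>xs. set xs = (UNIV::'n set) \<and> distinct xs" by (rule finite_distinct_list) simp
  from someI_ex[OF this] show "set (enumN::'n::finite list) = UNIV" "distinct (enumN::'n::finite list)"
    unfolding enumN_def by auto
qed

definition permsL :: "('n::finite \<Rightarrow> 'n) list" where
  "permsL = (SOME xs. set xs = {p. p permutes (UNIV::'n set)} \<and> distinct xs)"
lemma permsL: "set (permsL::('n::finite \<Rightarrow> 'n) list) = {p. p permutes (UNIV::'n set)}" "distinct (permsL::('n::finite \<Rightarrow> 'n) list)"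
proof -
  have "\<exists>xs. set xs = {p. p permutes (UNIV::'n set)} \<and> distinct xs"
    by (rule finite_distinct_list) (simp add: finite_permutations)
  from someI_ex[OF this] show "set (permsL::('n::finite \<Rightarrow> 'n) list) = {p. p permutes (UNIV::'n set)}" "distinct (permsL::('n::finite \<Rightarrow> 'n) list)"
    unfolding permsL_def by auto
qed

lemma sumN: "sum_list (map f (enumN::'n::finite list)) = (\<Sum>k\<in>UNIV. f k)"
  by (metis enumN sum_list_distinct_conv_sum_set)
lemma prodN: "prod_list (map f (enumN::'n::finite list)) = (\<Prod>k\<in>UNIV. f k)"
  by (metis enumN prod.distinct_set_conv_list)

definition detE :: "('k::comm_ring_1, ('n::finite \<times> 'n) + 'n) pexpr" where
  "detE = psum (map (\<lambda>p. PMul (PConst (of_int (sign p))) (pprod (map (\<lambda>i. PVar (Inl (i, p i))) enumN))) permsL)"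

lemma peval_detE: "peval (detE :: ('k::comm_ring_1, ('n::finite \<times> 'n) + 'n) pexpr) (coords z) = det (fst z)"
proof -
  have "peval (detE :: ('k, ('n \<times> 'n) + 'n) pexpr) (coords z) =
     sum_list (map (\<lambda>p. of_int (sign p) * (\<Prod>i\<in>UNIV. fst z $ i $ p i)) (permsL::('n \<Rightarrow> 'n) list))"
    unfolding detE_def peval_psum by (simp add: o_def peval_pprod prodN coords_def)
  also have "\<dots> = det (fst z)" unfolding det_def
    by (simp only: sum_list_distinct_conv_sum_set[OF permsL(2)] permsL(1))
  finally show ?thesis .
qed

definition ptOf :: "((('n::finite \<times> 'n) + 'n) \<Rightarrow> 'k) \<Rightarrow> ('k, 'n) pt" where
  "ptOf f = ((\<chi> i j. f (Inl (i, j))), (\<chi> i. f (Inr i)))"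
lemma coords_ptOf: "coords (ptOf f) = f"
  by (auto simp: fun_eq_iff coords_def ptOf_def split: sum.splits)

lemma infinite_k: assumes "alg_closed TYPE('k::field)" shows "infinite (UNIV::'k set)"
proof
  assume fin: "finite (UNIV::'k set)"
  define p :: "'k poly" where "p = (\<Prod>a\<in>UNIV. [:-a, 1:]) + 1"
  have "degree (\<Prod>a\<in>(UNIV::'k set). [:-a, 1:]) = card (UNIV::'k set)"
    by (subst degree_prod_sum_eq) auto
  moreover have "card (UNIV::'k set) > 0" using fin by (simp add: finite_UNIV_card_ge_0)
  ultimately have "degree p > 0" unfolding p_def
    by (metis degree_add_eq_left degree_1)
  then obtain x where "poly p x = 0" using assms unfolding alg_closed_def by blast
  moreover have "poly (\<Prod>a\<in>UNIV. [:-a, 1:]) x = 0"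
    using fin by (simp add: poly_prod)
  ultimately show False unfolding p_def by simp
qed


fun aff :: "('k::comm_ring_1, 'v) pexpr \<Rightarrow> bool" where
  "aff (PVar _) = True"
| "aff (PConst _) = True"
| "aff (PAdd p q) = (aff p \<and> aff q)"
| "aff (PNeg p) = aff p"
| "aff (PMul (PConst c) q) = aff q"
| "aff (PMul p (PConst c)) = aff p"
| "aff (PMul _ _) = False"

lemma aff_lin: "aff p \<Longrightarrow> peval p (\<lambda>i. x i + t * y i) = peval p x + t * pdiff p x y"
  apply (induction p rule: aff.induct)
  apply (simp_all add: algebra_simps)
  apply (metis distrib_left mult.assoc)
  done

lemma aff_psum: "(\<And>q. q \<in> set xs \<Longrightarrow> aff q) \<Longrightarrow> aff (psum xs)"
  by (induction xs) (auto simp: psum_def)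

definition Ecomm :: "'k::field ^ 'n::finite ^ 'n \<Rightarrow> 'n \<Rightarrow> 'n \<Rightarrow> ('k, ('n \<times> 'n) + 'n) pexpr" where
  "Ecomm X i j = psum (map (\<lambda>k. PAdd (PMul (PVar (Inl (i, k))) (PConst (X $ k $ j)))
       (PNeg (PMul (PConst (X $ i $ k)) (PVar (Inl (k, j)))))) enumN)"

definition Evec :: "'k::field ^ 'n::finite ^ 'n \<Rightarrow> 'k ^ 'n \<Rightarrow> 'n \<Rightarrow> ('k, ('n \<times> 'n) + 'n) pexpr" where
  "Evec X w i = PAdd (psum (map (\<lambda>k. PAdd (PMul (PConst (X $ i $ k)) (PVar (Inr k)))
       (PNeg (PMul (PVar (Inl (i, k))) (PConst (w $ k))))) enumN)) (PConst (w $ i))"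

lemma aff_Ecomm: "aff (Ecomm X i j)"
  unfolding Ecomm_def by (rule aff_psum) auto
lemma aff_Evec: "aff (Evec X w i)"
  unfolding Evec_def by (auto intro!: aff_psum)

lemma peval_Ecomm: "peval (Ecomm X i j) (coords z) = (fst z ** X - X ** fst z) $ i $ j"
  unfolding Ecomm_def peval_psum
  by (simp add: o_def sumN coords_def matrix_matrix_mult_def sum_subtractf)

lemma pdiff_Ecomm: "pdiff (Ecomm X i j) x (coords z) = (fst z ** X - X ** fst z) $ i $ j"
  unfolding Ecomm_def pdiff_psum
  by (simp add: o_def sumN coords_def matrix_matrix_mult_def sum_subtractf)

lemma peval_Evec: "peval (Evec X w i) (coords z) = (X *v snd z - fst z *v w + w) $ i"
  unfolding Evec_def
  by (simp add: peval_psum o_def sumN coords_def matrix_vector_mult_def sum_subtractf)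

lemma pdiff_Evec: "pdiff (Evec X w i) x (coords z) = (X *v snd z - fst z *v w) $ i"
  unfolding Evec_def
  by (simp add: pdiff_psum o_def sumN coords_def matrix_vector_mult_def sum_subtractf)

definition inL :: "'k::field ^ 'n::finite ^ 'n \<Rightarrow> 'k ^ 'n \<Rightarrow> ('k, 'n) pt \<Rightarrow> bool" where
  "inL X w z \<longleftrightarrow> fst z ** X = X ** fst z \<and> X *v snd z = fst z *v w - w"

lemma inL_iff: "inL X w z \<longleftrightarrow> (\<forall>i j. peval (Ecomm X i j) (coords z) = 0) \<and> (\<forall>i. peval (Evec X w i) (coords z) = 0)"
proof -
  have 1: "fst z ** X = X ** fst z \<longleftrightarrow> (\<forall>i j. (fst z ** X - X ** fst z) $ i $ j = 0)"
    by (auto simp: vec_eq_iff)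
  have 2: "X *v snd z = fst z *v w - w \<longleftrightarrow> (\<forall>i. (X *v snd z - fst z *v w + w) $ i = 0)"
    by (auto simp: vec_eq_iff algebra_simps)
  show ?thesis unfolding inL_def 1 2 peval_Ecomm peval_Evec ..
qed

lemma minv: assumes "invertible (g::'k::field ^ 'n::finite ^ 'n)"
  shows "g ** matrix_inv g = mat 1" "matrix_inv g ** g = mat 1"
proof -
  have "\<exists>A'. g ** A' = mat 1 \<and> A' ** g = mat 1" using assms unfolding invertible_def by blast
  from someI_ex[OF this] show "g ** matrix_inv g = mat 1" "matrix_inv g ** g = mat 1"
    unfolding matrix_inv_def by auto
qed

lemma stab_eq: "stabilizer (X, w) = {z. invertible (fst z) \<and> inL X w z}"
proof (safe)
  fix g v assume "(g, v) \<in> stabilizer (X, w)"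
  then have inv: "invertible g" and e: "g ** X ** matrix_inv g = X"
    and e2: "- ((g ** X ** matrix_inv g) *v v) + g *v w = w"
    by (auto simp: stabilizer_def Ad_def Let_def)
  show "invertible (fst (g, v))" using inv by simp
  have "g ** X = g ** X ** matrix_inv g ** g" using minv[OF inv]
    by (simp add: matrix_mul_assoc[symmetric])
  also have "\<dots> = X ** g" using e by simp
  finally have c: "g ** X = X ** g" .
  from e2 e have "X *v v = g *v w - w" by (simp add: algebra_simps)
  with c show "inL X w (g, v)" by (simp add: inL_def)
next
  fix g v assume inv: "invertible (fst (g, v))" and l: "inL X w (g, v)"
  then have c: "g ** X = X ** g" and e: "X *v v = g *v w - w" by (auto simp: inL_def)
  have "g ** X ** matrix_inv g = X ** (g ** matrix_inv g)" by (simp add: c matrix_mul_assoc)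
  also have "\<dots> = X" using minv(1)[of g] inv by simp
  finally have Z: "g ** X ** matrix_inv g = X" .
  show "(g, v) \<in> stabilizer (X, w)"
    using inv by (simp add: stabilizer_def Ad_def Let_def Z e)
qed

lemma finite_roots_ex:
  assumes "infinite (UNIV::'k::field set)" "(P::'k poly) \<noteq> 0"
  shows "\<exists>t. poly P t \<noteq> 0"
proof -
  have "finite {t. poly P t = 0}" using assms(2) by (rule poly_roots_finite)
  then show ?thesis using assms(1) by (metis (mono_tags, lifting) UNIV_eq_I mem_Collect_eq)
qed

lemma det_lineP: "poly (lineP (detE::('k::field, ('n::finite \<times> 'n) + 'n) pexpr) x y) t \<noteq> 0 \<Longrightarrow>
   invertible (fst (ptOf (\<lambda>c. x c + t * y c) :: ('k, 'n) pt))"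
proof -
  assume h: "poly (lineP (detE::('k::field, ('n::finite \<times> 'n) + 'n) pexpr) x y) t \<noteq> 0"
  have "det (fst (ptOf (\<lambda>c. x c + t * y c) :: ('k, 'n) pt)) \<noteq> 0"
    using h peval_detE[of "ptOf (\<lambda>c. x c + t * y c) :: ('k, 'n) pt"]
    unfolding poly_lineP coords_ptOf by simp
  then show ?thesis by (simp add: invertible_det_nz)
qed


lemma inL_line:
  assumes "\<And>i j. peval (Ecomm X i j) a = 0" "\<And>i. peval (Evec X w i) a = 0"
    "\<And>i j. pdiff (Ecomm X i j) a y = 0" "\<And>i. pdiff (Evec X w i) a y = 0"
  shows "inL X w (ptOf (\<lambda>c. a c + t * y c))"
  unfolding inL_iff coords_ptOf
  using assms by (simp add: aff_lin aff_Ecomm aff_Evec)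

lemma part1:
  fixes X :: "'k::field ^ 'n::finite ^ 'n" and w :: "'k ^ 'n"
  assumes inf: "infinite (UNIV::'k set)"
  shows "centralizer (X, w) = Lie (stabilizer (X, w))"
proof
  show "centralizer (X, w) \<subseteq> Lie (stabilizer (X, w))"
  proof
    fix z :: "('k, 'n) pt" assume "z \<in> centralizer (X, w)"
    then have zc: "X ** fst z - fst z ** X = 0" "X *v snd z - fst z *v w = 0"
      by (auto simp: centralizer_def bracket_def)
    define x0 where "x0 = coords (mat 1 :: 'k ^ 'n ^ 'n, 0 :: 'k ^ 'n)"
    define y where "y = coords z"
    have L: "inL X w (ptOf (\<lambda>c. x0 c + t * y c))" for t
    proof (rule inL_line)
      show "peval (Ecomm X i j) x0 = 0" for i j unfolding x0_def peval_Ecomm by simp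
      show "peval (Evec X w i) x0 = 0" for i unfolding x0_def peval_Evec by simp
      have "fst z ** X - X ** fst z = 0" using zc(1) by (simp add: algebra_simps)
      then show "pdiff (Ecomm X i j) x0 y = 0" for i j unfolding y_def pdiff_Ecomm by simp
      show "pdiff (Evec X w i) x0 y = 0" for i unfolding y_def pdiff_Evec using zc(2) by simp
    qed
    show "z \<in> Lie (stabilizer (X, w))" unfolding Lie_def
    proof (safe)
      fix p :: "('k, ('n \<times> 'n) + 'n) pexpr"
      assume van: "\<forall>h\<in>stabilizer (X, w). peval p (coords h) = 0"
      define q where "q = lineP p x0 y"
      define D where "D = lineP (detE :: ('k, ('n \<times> 'n) + 'n) pexpr) x0 y"
      have "poly (q * D) t = 0" for t
      proof (cases "poly D t = 0")
        case False
        then have "invertible (fst (ptOf (\<lambda>c. x0 c + t * y c) :: ('k, 'n) pt))"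
          unfolding D_def by (rule det_lineP)
        then have "ptOf (\<lambda>c. x0 c + t * y c) \<in> stabilizer (X, w)"
          using L stab_eq by blast
        then have "poly q t = 0" using van unfolding q_def poly_lineP
          by (metis coords_ptOf)
        then show ?thesis by simp
      qed simp
      then have "q * D = 0" using finite_roots_ex[OF inf] by blast
      moreover have "D \<noteq> 0"
      proof
        assume "D = 0"
        then have "coeff D 0 = 0" by simp
        moreover have "coeff D 0 = 1" unfolding D_def coeff0_lineP x0_def peval_detE by simp
        ultimately show False by simp
      qed
      ultimately have "q = 0" by simp
      then have "coeff q 1 = 0" by simp
      then show "pdiff p (coords (mat 1, 0)) (coords z) = 0"
        unfolding q_def coeff1_lineP x0_def y_def .
    qed
  qed
next
  show "Lie (stabilizer (X, w)) \<subseteq> centralizer (X, w)"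
  proof
    fix z :: "('k, 'n) pt" assume zL: "z \<in> Lie (stabilizer (X, w))"
    have "pdiff (Ecomm X i j) (coords (mat 1 :: 'k ^ 'n ^ 'n, 0 :: 'k ^ 'n)) (coords z) = 0" for i j
      using zL unfolding Lie_def
      by (auto simp: stab_eq inL_iff)
    then have 1: "fst z ** X - X ** fst z = 0"
      unfolding pdiff_Ecomm by (simp add: vec_eq_iff)
    have "pdiff (Evec X w i) (coords (mat 1 :: 'k ^ 'n ^ 'n, 0 :: 'k ^ 'n)) (coords z) = 0" for i
      using zL unfolding Lie_def
      by (auto simp: stab_eq inL_iff)
    then have 2: "X *v snd z - fst z *v w = 0"
      unfolding pdiff_Evec by (simp add: vec_eq_iff)
    from 1 2 show "z \<in> centralizer (X, w)"
      by (auto simp: centralizer_def bracket_def algebra_simps)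
  qed
qed


lemma open_poly:
  assumes "generate_topology_on {{z. peval p (coords z) \<noteq> 0} | p :: ('k::field, ('n::finite \<times> 'n) + 'n) pexpr. True} U"
  shows "a \<in> U \<Longrightarrow> \<exists>f :: ('k, ('n \<times> 'n) + 'n) pexpr. peval f (coords a) \<noteq> 0 \<and> {z. peval f (coords z) \<noteq> 0} \<subseteq> U"
  using assms
proof (induction arbitrary: a)
  case Empty
  then show ?case by simp
next
  case (Int U1 U2)
  then obtain f g :: "('k, ('n \<times> 'n) + 'n) pexpr" where
    "peval f (coords a) \<noteq> 0" "{z. peval f (coords z) \<noteq> 0} \<subseteq> U1"
    "peval g (coords a) \<noteq> 0" "{z. peval g (coords z) \<noteq> 0} \<subseteq> U2" by blast
  then show ?case by (intro exI[of _ "PMul f g"]) auto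
next
  case (UN K)
  then obtain k where "k \<in> K" "a \<in> k" by blast
  with UN show ?case by blast
next
  case (Basis s)
  then show ?case by blast
qed

lemma topspace_zariski: "topspace (zariski :: ('k::field, 'n::finite) pt topology) = UNIV"
proof -
  have "{z. peval (PConst 1 :: ('k, ('n \<times> 'n) + 'n) pexpr) (coords z) \<noteq> 0} = (UNIV :: ('k, 'n) pt set)"
    by simp
  then show ?thesis unfolding zariski_def topology_generated_by_topspace by blast
qed

lemma part2:
  fixes X :: "'k::field ^ 'n::finite ^ 'n" and w :: "'k ^ 'n"
  assumes inf: "infinite (UNIV::'k set)"
  shows "connectedin zariski (stabilizer (X, w))"
  unfolding connectedin topspace_zariski
proof (intro conjI subset_UNIV notI)
  assume "\<exists>E1 E2. openin zariski E1 \<and> openin zariski E2 \<and>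
             stabilizer (X, w) \<subseteq> E1 \<union> E2 \<and> E1 \<inter> E2 \<inter> stabilizer (X, w) = {} \<and>
             E1 \<inter> stabilizer (X, w) \<noteq> {} \<and> E2 \<inter> stabilizer (X, w) \<noteq> {}"
  then obtain E1 E2 :: "('k, 'n) pt set" where o1: "openin zariski E1" and o2: "openin zariski E2"
    and dis: "E1 \<inter> E2 \<inter> stabilizer (X, w) = {}"
    and n1: "E1 \<inter> stabilizer (X, w) \<noteq> {}" and n2: "E2 \<inter> stabilizer (X, w) \<noteq> {}"
    by blast
  obtain a where a: "a \<in> E1" "a \<in> stabilizer (X, w)" using n1 by blast
  obtain b where b: "b \<in> E2" "b \<in> stabilizer (X, w)" using n2 by blast
  obtain f :: "('k, ('n \<times> 'n) + 'n) pexpr" where f: "peval f (coords a) \<noteq> 0" "{z. peval f (coords z) \<noteq> 0} \<subseteq> E1"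
    using open_poly[OF o1[unfolded zariski_def openin_topology_generated_by_iff] a(1)] by blast
  obtain g :: "('k, ('n \<times> 'n) + 'n) pexpr" where g: "peval g (coords b) \<noteq> 0" "{z. peval g (coords z) \<noteq> 0} \<subseteq> E2"
    using open_poly[OF o2[unfolded zariski_def openin_topology_generated_by_iff] b(1)] by blast
  define xa where "xa = coords a"
  define y where "y = (\<lambda>c. coords b c - coords a c)"
  have xb: "(\<lambda>c. xa c + 1 * y c) = coords b" unfolding xa_def y_def by auto
  define P where "P = lineP f xa y * lineP g xa y * lineP (detE :: ('k, ('n \<times> 'n) + 'n) pexpr) xa y"
  have "lineP f xa y \<noteq> 0"
    using f(1) poly_lineP[of f xa y 0] xa_def by auto
  moreover have "lineP g xa y \<noteq> 0"
    using g(1) poly_lineP[of g xa y 1] xb by auto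
  moreover have "lineP (detE :: ('k, ('n \<times> 'n) + 'n) pexpr) xa y \<noteq> 0"
  proof
    assume "lineP (detE :: ('k, ('n \<times> 'n) + 'n) pexpr) xa y = 0"
    then have "coeff (lineP (detE :: ('k, ('n \<times> 'n) + 'n) pexpr) xa y) 0 = 0" by simp
    then have "det (fst a) = 0" unfolding coeff0_lineP xa_def peval_detE .
    moreover have "invertible (fst a)" using a(2) stab_eq by blast
    ultimately show False by (simp add: invertible_det_nz)
  qed
  ultimately have "P \<noteq> 0" unfolding P_def by simp
  then obtain t where t: "poly P t \<noteq> 0" using finite_roots_ex[OF inf] by blast
  define zt :: "('k, 'n) pt" where "zt = ptOf (\<lambda>c. xa c + t * y c)"
  have cz: "coords zt = (\<lambda>c. xa c + t * y c)" unfolding zt_def coords_ptOf ..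
  have "zt \<in> E1" using t f(2) unfolding P_def by (auto simp: poly_lineP cz[symmetric])
  moreover have "zt \<in> E2" using t g(2) unfolding P_def by (auto simp: poly_lineP cz[symmetric])
  moreover have "invertible (fst zt)" using t unfolding P_def zt_def
    by (intro det_lineP) simp
  moreover have "inL X w zt"
  proof -
    have La: "inL X w a" and Lb: "inL X w b" using a(2) b(2) stab_eq by blast+
    have ea: "peval (Ecomm X i j) xa = 0" "peval (Evec X w i) xa = 0" for i j
      using La unfolding inL_iff xa_def by auto
    have eb: "peval (Ecomm X i j) (\<lambda>c. xa c + 1 * y c) = 0" "peval (Evec X w i) (\<lambda>c. xa c + 1 * y c) = 0" for i j
      using Lb unfolding inL_iff xb by auto
    show ?thesis unfolding zt_def
    proof (rule inL_line)
      show "peval (Ecomm X i j) xa = 0" "peval (Evec X w i) xa = 0" for i j using ea by auto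
      show "pdiff (Ecomm X i j) xa y = 0" for i j
        using eb(1)[of i j] ea(1)[of i j] aff_lin[OF aff_Ecomm, of X i j xa 1 y] by simp
      show "pdiff (Evec X w i) xa y = 0" for i
        using eb(2)[of i] ea(2)[of i] aff_lin[OF aff_Evec, of X w i xa 1 y] by simp
    qed
  qed
  ultimately have "zt \<in> E1 \<inter> E2 \<inter> stabilizer (X, w)" using stab_eq by blast
  with dis show False by blast
qed

theorem lemma1p1:
  fixes X :: "'k::field ^ 'n::finite ^ 'n" and w :: "'k ^ 'n"
  assumes "alg_closed TYPE('k)"
    and "nilpotent_mat X"
  shows "centralizer (X, w) = Lie (stabilizer (X, w)) \<and>
         connectedin zariski (stabilizer (X, w))"
  using part1[OF infinite_k[OF assms(1)]] part2[OF infinite_k[OF assms(1)]] by blast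

end
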